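(* Let $q,r,\nu$ be positive integers with $q<\nu\le r$. Then the equation $\mathcal{M}^0(z)C=I_q$ (for all $z$) admits a solution $C\in\mathbb{R}^{\nu r\times q}$ not depending on $z$, and the set of such constant solutions is an affine space of dimension $(\nu-q)rq$.
   Context: $u(z)=(1,\dots,z^{q-1})^\top$, $w(z)=(1,\dots,z^{r-1})$, $M(z)=u(z)w(z)\in\mathbb{C}^{q\times r}$, and $\mathcal{M}^0(z)=(M(z),M'(z),\dots,M^{(\nu-1)}(z))\in\mathbb{C}^{q\times\nu r}$, derivatives taken in $z$. *)

theory Defs
  imports "HOL-Analysis.Analysis" "HOL-Library.Function_Algebras"
begin

text \<open>M(z) = u(z) w(z), a q x r matrix (indices from 0): entry (i,j) is z^i * z^j.\<close>
definition Mmat :: "complex \<Rightarrow> nat \<Rightarrow> nat \<Rightarrow> complex" where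
  "Mmat z i j = z ^ i * z ^ j"

text \<open>M^0(z) = (M(z), M'(z), ..., M^(nu-1)(z)), a q x (nu r) matrix; column a = k*r + j
  (k < nu, j < r) is column j of the k-th derivative of M.\<close>
definition M0 :: "nat \<Rightarrow> complex \<Rightarrow> nat \<Rightarrow> nat \<Rightarrow> complex" where
  "M0 r z i a = (deriv ^^ (a div r)) (\<lambda>\<zeta>. Mmat \<zeta> i (a mod r)) z"

text \<open>Real nu r x q matrices are represented as functions nat => nat => real vanishing
  outside the index range; this is the scalar multiplication making them a real vector space.\<close>
definition mscale :: "real \<Rightarrow> (nat \<Rightarrow> nat \<Rightarrow> real) \<Rightarrow> (nat \<Rightarrow> nat \<Rightarrow> real)" where
  "mscale c C = (\<lambda>a b. c * C a b)"

end

theory Submission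
  imports Defs "HOL-Computational_Algebra.Polynomial"
begin

lemma pderiv_sum': "pderiv (sum f A) = (\<Sum>x\<in>A. pderiv (f x))"
  using higher_pderiv_sum[of 1 f A] by simp

lemma Suc_choose': "Suc n choose k = (n choose k) + (if k = 0 then 0 else (n choose (k-1)))"
  by (cases k) simp_all

lemma higher_pderiv_mult:
  fixes p q :: "real poly"
  shows "(pderiv^^n) (p*q) = (\<Sum>i=0..n. smult (of_nat (n choose i)) ((pderiv^^i) p * (pderiv^^(n-i)) q))"
proof (induction n)
  case 0 then show ?case by simp
next
  case (Suc n)
  have "(pderiv^^Suc n) (p*q) = pderiv ((pderiv^^n) (p*q))" by simp
  also have "\<dots> = (\<Sum>i=0..n. smult (of_nat (n choose i)) ((pderiv^^i) p * (pderiv^^(Suc n-i)) q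
        + (pderiv^^Suc i) p * (pderiv^^(n-i)) q))"
    unfolding Suc pderiv_sum' pderiv_smult pderiv_mult
    by (intro sum.cong refl) (auto simp: Suc_diff_le algebra_simps)
  also have "\<dots> = (\<Sum>i=0..Suc n. smult (of_nat (Suc n choose i)) ((pderiv^^i) p * (pderiv^^(Suc n-i)) q))"
  proof -
    have A: "(\<Sum>i=0..Suc n. smult (of_nat (Suc n choose i)) ((pderiv^^i) p * (pderiv^^(Suc n-i)) q))
       = (\<Sum>i=0..Suc n. smult (of_nat (n choose i)) ((pderiv^^i) p * (pderiv^^(Suc n-i)) q))
       + (\<Sum>i=1..Suc n. smult (of_nat (n choose (i-1))) ((pderiv^^i) p * (pderiv^^(Suc n-i)) q))"
    proof -
      have "(\<Sum>i=0..Suc n. smult (of_nat (Suc n choose i)) ((pderiv^^i) p * (pderiv^^(Suc n-i)) q))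
        = (\<Sum>i=0..Suc n. smult (of_nat (n choose i)) ((pderiv^^i) p * (pderiv^^(Suc n-i)) q)
           + (if i = 0 then 0 else smult (of_nat (n choose (i-1))) ((pderiv^^i) p * (pderiv^^(Suc n-i)) q)))"
        by (intro sum.cong refl) (simp add: Suc_choose' smult_add_left)
      also have "\<dots> = (\<Sum>i=0..Suc n. smult (of_nat (n choose i)) ((pderiv^^i) p * (pderiv^^(Suc n-i)) q))
           + (\<Sum>i=0..Suc n. (if i = 0 then 0 else smult (of_nat (n choose (i-1))) ((pderiv^^i) p * (pderiv^^(Suc n-i)) q)))"
        by (simp add: sum.distrib)
      also have "(\<Sum>i=0..Suc n. (if i = 0 then 0 else smult (of_nat (n choose (i-1))) ((pderiv^^i) p * (pderiv^^(Suc n-i)) q)))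
          = (\<Sum>i=1..Suc n. smult (of_nat (n choose (i-1))) ((pderiv^^i) p * (pderiv^^(Suc n-i)) q))"
        by (subst sum.atLeast_Suc_atMost) simp_all
      finally show ?thesis .
    qed
    have B: "(\<Sum>i=1..Suc n. smult (of_nat (n choose (i-1))) ((pderiv^^i) p * (pderiv^^(Suc n-i)) q))
        = (\<Sum>i=0..n. smult (of_nat (n choose i)) ((pderiv^^Suc i) p * (pderiv^^(n-i)) q))"
      unfolding One_nat_def sum.shift_bounds_cl_Suc_ivl by simp
    have C: "(\<Sum>i=0..Suc n. smult (of_nat (n choose i)) ((pderiv^^i) p * (pderiv^^(Suc n-i)) q))
        = (\<Sum>i=0..n. smult (of_nat (n choose i)) ((pderiv^^i) p * (pderiv^^(Suc n-i)) q))"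
      by (simp add: sum.atLeast0_atMost_Suc)
    show ?thesis unfolding A B C by (simp add: sum.distrib smult_add_right)
  qed
  finally show ?case .
qed

definition gp :: "nat \<Rightarrow> (nat \<Rightarrow> real) \<Rightarrow> nat \<Rightarrow> real poly" where
  "gp r c k = (\<Sum>j<r. monom (c (k*r+j)) j)"
definition ap :: "nat \<Rightarrow> (nat \<Rightarrow> real poly) \<Rightarrow> nat \<Rightarrow> real poly" where
  "ap \<nu> G l = (\<Sum>k<\<nu>. smult (of_nat (k choose l)) ((pderiv^^(k-l)) (G k)))"
definition Rp :: "nat \<Rightarrow> nat \<Rightarrow> (nat \<Rightarrow> real) \<Rightarrow> nat \<Rightarrow> real poly" where
  "Rp \<nu> r c i = (\<Sum>k<\<nu>. (pderiv^^k) (monom 1 i * gp r c k))"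

lemma coeff_gp: "coeff (gp r c k) n = (if n < r then c (k*r+n) else 0)"
  unfolding gp_def coeff_sum coeff_monom by simp

lemma degree_gp: "0 < r \<Longrightarrow> degree (gp r c k) < r"
proof -
  assume "0 < r"
  have "degree (gp r c k) \<le> r - 1"
    by (rule degree_le) (auto simp: coeff_gp)
  with \<open>0 < r\<close> show ?thesis by linarith
qed

lemma ap_split:
  assumes "m < \<nu>"
  shows "ap \<nu> G m = G m + (\<Sum>k\<in>{m<..<\<nu>}. smult (of_nat (k choose m)) ((pderiv^^(k-m)) (G k)))"
proof -
  have e: "{..<\<nu>} = {..<m} \<union> insert m {m<..<\<nu>}" using assms by auto
  have z: "(\<Sum>k<m. smult (of_nat (k choose m)) ((pderiv^^(k-m)) (G k))) = 0"
    by (intro sum.neutral ballI) (simp add: binomial_eq_0)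
  show ?thesis unfolding ap_def e
    by (subst sum.union_disjoint) (auto simp: binomial_eq_0 intro!: sum.neutral)
qed

lemma P_zero: "i < l \<Longrightarrow> (pderiv^^l) (monom (1::real) i) = 0"
  by (intro poly_eqI) (auto simp: coeff_higher_pderiv coeff_monom)

lemma P_diag: "(pderiv^^i) (monom (1::real) i) = [:fact i:]"
  by (intro poly_eqI) (auto simp: coeff_higher_pderiv coeff_monom pochhammer_fact coeff_pCons split: nat.splits)

lemma degree_P: "degree ((pderiv^^l) (monom (1::real) i)) \<le> i - l"
  by (simp add: degree_higher_pderiv degree_monom_eq)


lemma exists_back:
  assumes "m \<le> \<nu>" "0 < r" "\<And>l. l < m \<Longrightarrow> degree (t l) < r" "\<And>k. degree (G k) < r"
  shows "\<exists>G'. (\<forall>k. m \<le> k \<longrightarrow> G' k = G k) \<and> (\<forall>k. degree (G' k) < r) \<and> (\<forall>l<m. ap \<nu> G' l = t l)"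
  using assms
proof (induction m arbitrary: G)
  case 0
  then show ?case by (intro exI[of _ G]) auto
next
  case (Suc m)
  define G1 where "G1 = G(m := t m - (\<Sum>k\<in>{m<..<\<nu>}. smult (of_nat (k choose m)) ((pderiv^^(k-m)) (G k))))"
  have dsum: "degree (\<Sum>k\<in>{m<..<\<nu>}. smult (of_nat (k choose m)) ((pderiv^^(k-m)) (G k))) < r"
  proof -
    have "degree (\<Sum>k\<in>{m<..<\<nu>}. smult (of_nat (k choose m)) ((pderiv^^(k-m)) (G k))) \<le> r - 1"
    proof (rule degree_sum_le)
      fix k
      have "degree (smult (of_nat (k choose m)) ((pderiv^^(k-m)) (G k))) \<le> degree (G k)"
        by (simp add: degree_higher_pderiv) linarith
      also have "\<dots> \<le> r - 1" using Suc.prems(4)[of k] by linarith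
      finally show "degree (smult (of_nat (k choose m)) ((pderiv^^(k-m)) (G k))) \<le> r - 1" .
    qed auto
    with Suc.prems(2) show ?thesis by linarith
  qed
  have dG1: "degree (G1 k) < r" for k
  proof (cases "k = m")
    case True
    have "degree (G1 k) \<le> max (degree (t m)) (degree (\<Sum>k\<in>{m<..<\<nu>}. smult (of_nat (k choose m)) ((pderiv^^(k-m)) (G k))))"
      unfolding G1_def True by (simp add: degree_diff_le_max)
    with dsum Suc.prems(3)[of m] show ?thesis by simp
  next
    case False then show ?thesis using Suc.prems(4) by (simp add: G1_def)
  qed
  obtain G' where G': "\<forall>k. m \<le> k \<longrightarrow> G' k = G1 k" "\<forall>k. degree (G' k) < r" "\<forall>l<m. ap \<nu> G' l = t l"
    using Suc.IH[of G1] Suc.prems dG1 by auto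
  show ?case
  proof (intro exI[of _ G'] conjI allI impI)
    fix k assume "Suc m \<le> k" then show "G' k = G k" using G'(1) by (simp add: G1_def)
  next
    fix k show "degree (G' k) < r" using G'(2) by simp
  next
    fix l assume l: "l < Suc m"
    show "ap \<nu> G' l = t l"
    proof (cases "l < m")
      case True then show ?thesis using G'(3) by simp
    next
      case False
      then have lm: "l = m" using l by simp
      have "ap \<nu> G' m = G' m + (\<Sum>k\<in>{m<..<\<nu>}. smult (of_nat (k choose m)) ((pderiv^^(k-m)) (G' k)))"
        using Suc.prems(1) by (intro ap_split) simp
      also have "(\<Sum>k\<in>{m<..<\<nu>}. smult (of_nat (k choose m)) ((pderiv^^(k-m)) (G' k)))
          = (\<Sum>k\<in>{m<..<\<nu>}. smult (of_nat (k choose m)) ((pderiv^^(k-m)) (G k)))"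
        using G'(1) by (intro sum.cong refl) (simp add: G1_def)
      also have "G' m = G1 m" using G'(1) by simp
      finally show ?thesis unfolding lm by (simp add: G1_def)
    qed
  qed
qed

lemma uniq_back:
  assumes "q \<le> \<nu>" "\<And>l. l < q \<Longrightarrow> ap \<nu> G l = ap \<nu> G' l"
    "\<And>k. q \<le> k \<Longrightarrow> k < \<nu> \<Longrightarrow> G k = G' k"
  shows "\<forall>l<q. G l = G' l"
proof -
  have "\<forall>l. l < q \<longrightarrow> q - l \<le> n \<longrightarrow> G l = G' l" for n
  proof (induction n)
    case 0 then show ?case by auto
  next
    case (Suc n)
    show ?case
    proof (intro allI impI)
      fix l assume l: "l < q" "q - l \<le> Suc n"
      have lnu: "l < \<nu>" using l assms(1) by simp
      have "(\<Sum>k\<in>{l<..<\<nu>}. smult (of_nat (k choose l)) ((pderiv^^(k-l)) (G k)))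
          = (\<Sum>k\<in>{l<..<\<nu>}. smult (of_nat (k choose l)) ((pderiv^^(k-l)) (G' k)))"
      proof (intro sum.cong refl)
        fix k assume k: "k \<in> {l<..<\<nu>}"
        show "smult (of_nat (k choose l)) ((pderiv^^(k-l)) (G k)) = smult (of_nat (k choose l)) ((pderiv^^(k-l)) (G' k))"
        proof (cases "k < q")
          case True
          then have "G k = G' k" using Suc.IH k l by auto
          then show ?thesis by simp
        next
          case False then show ?thesis using assms(3) k by auto
        qed
      qed
      moreover have "ap \<nu> G l = ap \<nu> G' l" using assms(2) l by simp
      ultimately show "G l = G' l" using ap_split[OF lnu, of G] ap_split[OF lnu, of G'] by simp
    qed
  qed
  then show ?thesis by (meson diff_le_self)
qed

lemma triangular:
  fixes \<delta> :: "nat \<Rightarrow> real"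
  shows "\<exists>A. (\<forall>l<q. degree (A l) \<le> l) \<and>
    (\<forall>a. (\<forall>i<q. (\<Sum>l\<le>i. (pderiv^^l) (monom 1 i) * a l) = [:\<delta> i:]) \<longleftrightarrow> (\<forall>l<q. a l = A l))"
proof (induction q)
  case 0 then show ?case by auto
next
  case (Suc q)
  then obtain A where A: "\<forall>l<q. degree (A l) \<le> l"
    "\<And>a. (\<forall>i<q. (\<Sum>l\<le>i. (pderiv^^l) (monom 1 i) * a l) = [:\<delta> i:]) \<longleftrightarrow> (\<forall>l<q. a l = A l)"
    by blast
  define S where "S = (\<Sum>l<q. (pderiv^^l) (monom (1::real) q) * A l)"
  define A' where "A' = A(q := smult (1 / fact q) ([:\<delta> q:] - S))"
  have dS: "degree S \<le> q" unfolding S_def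
  proof (rule degree_sum_le)
    fix l assume "l \<in> {..<q}"
    then have "degree (A l) \<le> l" "l < q" using A(1) by auto
    then show "degree ((pderiv^^l) (monom (1::real) q) * A l) \<le> q"
      using degree_mult_le[of "(pderiv^^l) (monom (1::real) q)" "A l"] degree_P[of l q] by linarith
  qed auto
  have dA': "\<forall>l<Suc q. degree (A' l) \<le> l"
  proof (intro allI impI)
    fix l assume "l < Suc q"
    show "degree (A' l) \<le> l"
    proof (cases "l = q")
      case True
      have "degree ([:\<delta> q:] - S) \<le> q" using dS degree_diff_le[of "[:\<delta> q:]" q S] by simp
      then show ?thesis using True by (simp add: A'_def)
    next
      case False then show ?thesis using A(1) \<open>l < Suc q\<close> by (simp add: A'_def)
    qed
  qed
  show ?case
  proof (intro exI[of _ A'] conjI dA' allI)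
    fix a :: "nat \<Rightarrow> real poly"
    have eqq: "(\<Sum>l\<le>q. (pderiv^^l) (monom 1 q) * a l) = S + smult (fact q) (a q)"
      if "\<forall>l<q. a l = A l"
    proof -
      have "(\<Sum>l\<le>q. (pderiv^^l) (monom (1::real) q) * a l) = (\<Sum>l<q. (pderiv^^l) (monom (1::real) q) * a l) + (pderiv^^q) (monom 1 q) * a q"
        by (simp add: lessThan_Suc_atMost[symmetric])
      also have "(\<Sum>l<q. (pderiv^^l) (monom (1::real) q) * a l) = S"
        unfolding S_def using that by (intro sum.cong) auto
      finally show ?thesis by (simp add: P_diag)
    qed
    have "(\<forall>i<Suc q. (\<Sum>l\<le>i. (pderiv^^l) (monom 1 i) * a l) = [:\<delta> i:])
       \<longleftrightarrow> (\<forall>l<q. a l = A l) \<and> (\<Sum>l\<le>q. (pderiv^^l) (monom 1 q) * a l) = [:\<delta> q:]"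
      using A(2)[of a] by (auto simp: less_Suc_eq)
    also have "\<dots> \<longleftrightarrow> (\<forall>l<q. a l = A l) \<and> a q = A' q"
    proof -
      have "S + smult (fact q) (a q) = [:\<delta> q:] \<longleftrightarrow> a q = smult (1 / fact q) ([:\<delta> q:] - S)"
      proof
        assume "S + smult (fact q) (a q) = [:\<delta> q:]"
        then have "smult (fact q) (a q) = [:\<delta> q:] - S" by (simp add: algebra_simps)
        then have "smult (1/fact q) (smult (fact q) (a q)) = smult (1 / fact q) ([:\<delta> q:] - S)" by simp
        then show "a q = smult (1 / fact q) ([:\<delta> q:] - S)" by simp
      next
        assume "a q = smult (1 / fact q) ([:\<delta> q:] - S)"
        then show "S + smult (fact q) (a q) = [:\<delta> q:]" by simp
      qed
      then show ?thesis using eqq by (auto simp: A'_def)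
    qed
    also have "\<dots> \<longleftrightarrow> (\<forall>l<Suc q. a l = A' l)"
      by (auto simp: A'_def less_Suc_eq)
    finally show "(\<forall>i<Suc q. (\<Sum>l\<le>i. (pderiv^^l) (monom 1 i) * a l) = [:\<delta> i:]) \<longleftrightarrow> (\<forall>l<Suc q. a l = A' l)" .
  qed
qed


lemma Rp_decomp:
  assumes "i < \<nu>"
  shows "Rp \<nu> r c i = (\<Sum>l\<le>i. (pderiv^^l) (monom 1 i) * ap \<nu> (gp r c) l)"
proof -
  let ?P = "\<lambda>l. (pderiv^^l) (monom (1::real) i)"
  let ?g = "gp r c"
  have "Rp \<nu> r c i = (\<Sum>k<\<nu>. \<Sum>l=0..k. smult (of_nat (k choose l)) (?P l * (pderiv^^(k-l)) (?g k)))"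
    unfolding Rp_def by (simp add: higher_pderiv_mult)
  also have "\<dots> = (\<Sum>k<\<nu>. \<Sum>l<\<nu>. smult (of_nat (k choose l)) (?P l * (pderiv^^(k-l)) (?g k)))"
    by (intro sum.cong refl sum.mono_neutral_left) (auto simp: binomial_eq_0)
  also have "\<dots> = (\<Sum>l<\<nu>. \<Sum>k<\<nu>. smult (of_nat (k choose l)) (?P l * (pderiv^^(k-l)) (?g k)))"
    by (rule sum.swap)
  also have "\<dots> = (\<Sum>l<\<nu>. ?P l * ap \<nu> ?g l)"
    unfolding ap_def by (simp add: sum_distrib_left mult_smult_right)
  also have "\<dots> = (\<Sum>l\<le>i. ?P l * ap \<nu> ?g l)"
    using assms by (intro sum.mono_neutral_right) (auto simp: P_zero)
  finally show ?thesis .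
qed

lemma sum_split_mult: fixes m r :: nat shows "(\<Sum>a < m * r. f a) = (\<Sum>k<m. \<Sum>j<r. f (k*r+j))"
proof (induction m)
  case 0 then show ?case by simp
next
  case (Suc m)
  have "(\<Sum>a < Suc m * r. f a) = (\<Sum>a < m * r. f a) + (\<Sum>a\<in>{m*r..<m*r+r}. f a)"
    by (simp add: lessThan_atLeast0 sum.atLeastLessThan_concat add.commute)
  also have "(\<Sum>a\<in>{m*r..<m*r+r}. f a) = (\<Sum>j<r. f (m*r+j))"
  proof -
    have "{m*r..<m*r+r} = (\<lambda>j. m*r+j) ` {..<r}"
      by (auto simp: image_iff) (metis add_diff_inverse_nat add_less_cancel_left lessThan_iff not_less)
    then show ?thesis by (simp add: sum.reindex)
  qed
  finally show ?case using Suc by simp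
qed

lemma higher_deriv_poly: "(deriv^^k) (\<lambda>x. poly p x) = (\<lambda>x. poly ((pderiv^^k) p) (x::complex))"
proof (induction k)
  case 0 then show ?case by simp
next
  case (Suc k)
  show ?case by (simp add: Suc DERIV_imp_deriv[OF poly_DERIV])
qed

lemma ofr_pderiv: "map_poly complex_of_real (pderiv p) = pderiv (map_poly complex_of_real p)"
  by (intro poly_eqI) (simp add: coeff_pderiv coeff_map_poly)

lemma ofr_higher_pderiv: "map_poly complex_of_real ((pderiv^^k) p) = (pderiv^^k) (map_poly complex_of_real p)"
  by (induction k) (simp_all add: ofr_pderiv)

lemma ofr_add: "map_poly complex_of_real (p + q) = map_poly complex_of_real p + map_poly complex_of_real q"
  by (intro poly_eqI) (simp add: coeff_map_poly)

lemma ofr_sum: "map_poly complex_of_real (sum f A) = (\<Sum>x\<in>A. map_poly complex_of_real (f x))"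
  by (induction A rule: infinite_finite_induct) (simp_all add: ofr_add)

lemma ofr_smult: "map_poly complex_of_real (smult c p) = smult (of_real c) (map_poly complex_of_real p)"
  by (intro poly_eqI) (simp add: coeff_map_poly)

lemma ofr_inj: "map_poly complex_of_real p = map_poly complex_of_real q \<Longrightarrow> p = q"
  by (intro poly_eqI) (metis coeff_map_poly of_real_0 of_real_eq_iff)

lemma M0_eq:
  assumes "0 < r" "j < r"
  shows "M0 r z i (k*r+j) = poly (map_poly complex_of_real ((pderiv^^k) (monom 1 (i+j)))) z"
proof -
  have d: "(k*r+j) div r = k" "(k*r+j) mod r = j" using assms by auto
  have f: "(\<lambda>\<zeta>. Mmat \<zeta> i j) = (\<lambda>\<zeta>. poly (monom (1::complex) (i+j)) \<zeta>)"
    by (simp add: Mmat_def poly_monom power_add)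
  show ?thesis
    unfolding M0_def d f higher_deriv_poly ofr_higher_pderiv by (simp add: map_poly_monom)
qed

lemma translate:
  assumes "0 < r"
  shows "(\<Sum>a<\<nu>*r. M0 r z i a * complex_of_real (c a)) = poly (map_poly complex_of_real (Rp \<nu> r c i)) z"
proof -
  have "Rp \<nu> r c i = (\<Sum>k<\<nu>. \<Sum>j<r. smult (c (k*r+j)) ((pderiv^^k) (monom 1 (i+j))))"
    unfolding Rp_def gp_def
    by (simp add: sum_distrib_left mult_monom higher_pderiv_sum)
      (intro sum.cong refl, metis higher_pderiv_smult smult_monom mult_1_right)
  then show ?thesis
    using assms by (simp add: sum_split_mult M0_eq ofr_sum ofr_smult poly_sum mult.commute)
qed


definition QCc :: "nat \<Rightarrow> nat \<Rightarrow> nat \<Rightarrow> real \<Rightarrow> (nat \<Rightarrow> real) \<Rightarrow> nat \<Rightarrow> bool" where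
  "QCc q \<nu> r \<epsilon> c b \<longleftrightarrow> (\<forall>z::complex. \<forall>i<q.
     (\<Sum>a<\<nu>*r. M0 r z i a * complex_of_real (c a)) = (if i = b then complex_of_real \<epsilon> else 0))"

lemma QC_poly:
  assumes "0 < r" "q \<le> \<nu>"
  shows "QCc q \<nu> r \<epsilon> c b \<longleftrightarrow>
    (\<forall>i<q. (\<Sum>l\<le>i. (pderiv^^l) (monom 1 i) * ap \<nu> (gp r c) l) = [:if i = b then \<epsilon> else 0:])"
proof -
  have one: "(\<forall>z. poly (map_poly complex_of_real R) z = complex_of_real d) \<longleftrightarrow> R = [:d:]" for R d
  proof
    assume h: "\<forall>z. poly (map_poly complex_of_real R) z = complex_of_real d"
    have "poly (map_poly complex_of_real R) = poly (map_poly complex_of_real [:d:])"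
      using h by (auto simp: map_poly_pCons)
    then show "R = [:d:]" unfolding poly_eq_poly_eq_iff by (rule ofr_inj)
  qed (auto simp: map_poly_pCons)
  have ifc: "(if i = b then complex_of_real \<epsilon> else 0) = complex_of_real (if i = b then \<epsilon> else 0)" for i
    by simp
  have "QCc q \<nu> r \<epsilon> c b \<longleftrightarrow> (\<forall>i<q. Rp \<nu> r c i = [:if i = b then \<epsilon> else 0:])"
  proof -
    have "QCc q \<nu> r \<epsilon> c b \<longleftrightarrow> (\<forall>i<q. \<forall>z. poly (map_poly complex_of_real (Rp \<nu> r c i)) z = complex_of_real (if i = b then \<epsilon> else 0))"
      unfolding QCc_def translate[OF assms(1)] ifc by blast
    also have "\<dots> \<longleftrightarrow> (\<forall>i<q. Rp \<nu> r c i = [:if i = b then \<epsilon> else 0:])"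
      by (simp only: one)
    finally show ?thesis .
  qed
  also have "\<dots> \<longleftrightarrow> (\<forall>i<q. (\<Sum>l\<le>i. (pderiv^^l) (monom 1 i) * ap \<nu> (gp r c) l) = [:if i = b then \<epsilon> else 0:])"
    using assms(2) by (auto simp: Rp_decomp)
  finally show ?thesis .
qed

lemma QC_target:
  assumes "0 < r" "q \<le> \<nu>"
  shows "\<exists>A. (\<forall>l<q. degree (A l) \<le> l) \<and> (\<forall>c. QCc q \<nu> r \<epsilon> c b \<longleftrightarrow> (\<forall>l<q. ap \<nu> (gp r c) l = A l))"
proof -
  obtain A where A: "\<forall>l<q. degree (A l) \<le> l"
    "\<forall>a. (\<forall>i<q. (\<Sum>l\<le>i. (pderiv^^l) (monom 1 i) * a l) = [:if i = b then \<epsilon> else 0:]) \<longleftrightarrow> (\<forall>l<q. a l = A l)"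
    using triangular[of q "\<lambda>i. if i = b then \<epsilon> else 0"] by blast
  have "\<forall>c. QCc q \<nu> r \<epsilon> c b \<longleftrightarrow> (\<forall>l<q. ap \<nu> (gp r c) l = A l)"
  proof
    fix c
    show "QCc q \<nu> r \<epsilon> c b \<longleftrightarrow> (\<forall>l<q. ap \<nu> (gp r c) l = A l)"
      unfolding QC_poly[OF assms] by (rule A(2)[rule_format])
  qed
  with A(1) show ?thesis by blast
qed

lemma idx_lt: "k < \<nu> \<Longrightarrow> j < r \<Longrightarrow> k*r+j < \<nu>*(r::nat)"
proof -
  assume "k < \<nu>" "j < r"
  then have "k*r+j < Suc k * r" by simp
  also have "\<dots> \<le> \<nu>*r" using \<open>k < \<nu>\<close> by (intro mult_le_mono1) simp
  finally show ?thesis .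
qed

lemma idx_ge: "q \<le> k \<Longrightarrow> q*r \<le> k*r+(j::nat)"
  by (metis mult_le_mono1 trans_le_add1)

lemma col_exists:
  assumes "q < \<nu>" "\<nu> \<le> r"
  shows "\<exists>c. (\<forall>a. \<nu>*r \<le> a \<longrightarrow> c a = 0) \<and> (\<forall>a. q*r \<le> a \<longrightarrow> a < \<nu>*r \<longrightarrow> c a = F a) \<and> QCc q \<nu> r \<epsilon> c b"
proof -
  have r: "0 < r" using assms by simp
  obtain A where A: "\<forall>l<q. degree (A l) \<le> l" "\<forall>c. QCc q \<nu> r \<epsilon> c b \<longleftrightarrow> (\<forall>l<q. ap \<nu> (gp r c) l = A l)"
    using QC_target[OF r, of q \<nu> \<epsilon> b] assms by auto
  have dA: "degree (A l) < r" if "l < q" for l using A(1) that assms by fastforce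
  obtain G' where G': "\<forall>k. q \<le> k \<longrightarrow> G' k = gp r F k" "\<forall>k. degree (G' k) < r" "\<forall>l<q. ap \<nu> G' l = A l"
    using exists_back[of q \<nu> r A "gp r F"] assms dA degree_gp[OF r] by auto
  define c where "c a = (if a < \<nu>*r then coeff (G' (a div r)) (a mod r) else 0)" for a
  have gpc: "gp r c k = G' k" if "k < \<nu>" for k
  proof (rule poly_eqI)
    fix n
    show "coeff (gp r c k) n = coeff (G' k) n"
    proof (cases "n < r")
      case True
      then show ?thesis using idx_lt[OF that True] r by (simp add: coeff_gp c_def)
    next
      case False
      then show ?thesis using G'(2)[rule_format, of k] by (simp add: coeff_gp coeff_eq_0)
    qed
  qed
  have apc: "ap \<nu> (gp r c) l = ap \<nu> G' l" for l
    unfolding ap_def by (intro sum.cong refl) (simp add: gpc)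
  show ?thesis
  proof (intro exI[of _ c] conjI allI impI)
    fix a assume "\<nu>*r \<le> a" then show "c a = 0" by (simp add: c_def)
  next
    fix a assume a: "q*r \<le> a" "a < \<nu>*r"
    have "q \<le> a div r" using a(1) r div_less_iff_less_mult[of r a q] by linarith
    then have "G' (a div r) = gp r F (a div r)" using G'(1) by simp
    then show "c a = F a" using a r by (simp add: c_def coeff_gp)
  next
    show "QCc q \<nu> r \<epsilon> c b" using A(2) G'(3) apc by simp
  qed
qed

lemma col_unique:
  assumes "q < \<nu>" "\<nu> \<le> r"
    and "\<forall>a. \<nu>*r \<le> a \<longrightarrow> c a = 0" "\<forall>a. \<nu>*r \<le> a \<longrightarrow> c' a = 0"
    and "\<forall>a. q*r \<le> a \<longrightarrow> a < \<nu>*r \<longrightarrow> c a = c' a"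
    and "QCc q \<nu> r \<epsilon> c b" "QCc q \<nu> r \<epsilon> c' b"
  shows "c = c'"
proof
  fix a
  have r: "0 < r" using assms by simp
  obtain A where A: "\<forall>l<q. degree (A l) \<le> l" "\<forall>c. QCc q \<nu> r \<epsilon> c b \<longleftrightarrow> (\<forall>l<q. ap \<nu> (gp r c) l = A l)"
    using QC_target[OF r, of q \<nu> \<epsilon> b] assms by auto
  have "\<forall>l<q. gp r c l = gp r c' l"
  proof (rule uniq_back[of q \<nu>])
    show "q \<le> \<nu>" using assms by simp
    fix l assume "l < q" then show "ap \<nu> (gp r c) l = ap \<nu> (gp r c') l" using A(2) assms(6,7) by simp
  next
    fix k assume k: "q \<le> k" "k < \<nu>"
    show "gp r c k = gp r c' k" unfolding gp_def
      by (intro sum.cong refl) (simp add: assms(5) idx_lt[OF k(2)] idx_ge[OF k(1)])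
  qed
  show "c a = c' a"
  proof (cases "a < q*r")
    case True
    then have l: "a div r < q" using r by (simp add: div_less_iff_less_mult)
    have "coeff (gp r c (a div r)) (a mod r) = coeff (gp r c' (a div r)) (a mod r)"
      using \<open>\<forall>l<q. gp r c l = gp r c' l\<close> l by simp
    then show ?thesis using r by (simp add: coeff_gp)
  next
    case False
    then show ?thesis using assms(3,4,5) by (cases "a < \<nu>*r") auto
  qed
qed


definition Sol :: "nat \<Rightarrow> nat \<Rightarrow> nat \<Rightarrow> real \<Rightarrow> (nat \<Rightarrow> nat \<Rightarrow> real) set" where
  "Sol q \<nu> r \<epsilon> = {C. (\<forall>a b. (\<nu> * r \<le> a \<or> q \<le> b) \<longrightarrow> C a b = 0) \<and> (\<forall>b<q. QCc q \<nu> r \<epsilon> (\<lambda>a. C a b) b)}"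

lemma glob_exists:
  assumes "q < \<nu>" "\<nu> \<le> r"
  shows "\<exists>C. C \<in> Sol q \<nu> r \<epsilon> \<and> (\<forall>a b. q*r \<le> a \<longrightarrow> a < \<nu>*r \<longrightarrow> b < q \<longrightarrow> C a b = F a b)"
proof -
  have ex: "\<exists>c. (\<forall>a. \<nu>*r \<le> a \<longrightarrow> c a = 0) \<and> (\<forall>a. q*r \<le> a \<longrightarrow> a < \<nu>*r \<longrightarrow> c a = F a b) \<and> QCc q \<nu> r \<epsilon> c b" for b
    by (rule col_exists[OF assms, of "\<lambda>a. F a b" \<epsilon> b])
  define f where "f b = (SOME c. (\<forall>a. \<nu>*r \<le> a \<longrightarrow> c a = 0) \<and> (\<forall>a. q*r \<le> a \<longrightarrow> a < \<nu>*r \<longrightarrow> c a = F a b) \<and> QCc q \<nu> r \<epsilon> c b)" for b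
  have f0: "(\<forall>a. \<nu>*r \<le> a \<longrightarrow> f b a = 0) \<and> (\<forall>a. q*r \<le> a \<longrightarrow> a < \<nu>*r \<longrightarrow> f b a = F a b) \<and> QCc q \<nu> r \<epsilon> (f b) b" for b
    unfolding f_def by (rule someI_ex[OF ex])
  have f1: "\<forall>a. \<nu>*r \<le> a \<longrightarrow> f b a = 0" for b using f0[of b] by (rule conjunct1)
  have f2: "\<forall>a. q*r \<le> a \<longrightarrow> a < \<nu>*r \<longrightarrow> f b a = F a b" for b using f0[of b] by (rule conjunct1[OF conjunct2])
  have f3: "QCc q \<nu> r \<epsilon> (f b) b" for b using f0[of b] by (rule conjunct2[OF conjunct2])
  note f = f1 f2 f3
  define C where "C a b = (if b < q then f b a else 0)" for a b
  have "C \<in> Sol q \<nu> r \<epsilon>"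
    unfolding Sol_def
  proof (intro CollectI conjI allI impI)
    fix a b assume "\<nu> * r \<le> a \<or> q \<le> b" then show "C a b = 0" using f by (auto simp: C_def)
  next
    fix b assume "b < q"
    then have "(\<lambda>a. C a b) = f b" by (auto simp: C_def)
    then show "QCc q \<nu> r \<epsilon> (\<lambda>a. C a b) b" using f by simp
  qed
  moreover have "\<forall>a b. q*r \<le> a \<longrightarrow> a < \<nu>*r \<longrightarrow> b < q \<longrightarrow> C a b = F a b"
    using f by (auto simp: C_def)
  ultimately show ?thesis by blast
qed

lemma glob_unique:
  assumes "q < \<nu>" "\<nu> \<le> r" "C \<in> Sol q \<nu> r \<epsilon>" "C' \<in> Sol q \<nu> r \<epsilon>"
    "\<forall>a b. q*r \<le> a \<longrightarrow> a < \<nu>*r \<longrightarrow> b < q \<longrightarrow> C a b = C' a b"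
  shows "C = C'"
proof (intro ext)
  fix a b
  show "C a b = C' a b"
  proof (cases "b < q")
    case True
    have "(\<lambda>a. C a b) = (\<lambda>a. C' a b)"
      by (rule col_unique[OF assms(1,2), of _ _ \<epsilon> b]) (use assms True in \<open>auto simp: Sol_def\<close>)
    then show ?thesis by metis
  next
    case False then show ?thesis using assms(3,4) by (auto simp: Sol_def)
  qed
qed

lemma glob_lin:
  assumes "C \<in> Sol q \<nu> r e1" "C' \<in> Sol q \<nu> r e2"
  shows "(\<lambda>a b. x * C a b + y * C' a b) \<in> Sol q \<nu> r (x*e1 + y*e2)"
  unfolding Sol_def
proof (intro CollectI conjI allI impI)
  fix a b assume "\<nu> * r \<le> a \<or> q \<le> b" then show "x * C a b + y * C' a b = 0" using assms by (auto simp: Sol_def)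
next
  fix b assume b: "b < q"
  have h1: "QCc q \<nu> r e1 (\<lambda>a. C a b) b" and h2: "QCc q \<nu> r e2 (\<lambda>a. C' a b) b"
    using assms b by (auto simp: Sol_def)
  show "QCc q \<nu> r (x*e1 + y*e2) (\<lambda>a. x * C a b + y * C' a b) b"
    unfolding QCc_def
  proof (intro allI impI)
    fix z :: complex and i assume i: "i < q"
    have "(\<Sum>a<\<nu>*r. M0 r z i a * complex_of_real (x * C a b + y * C' a b))
       = of_real x * (\<Sum>a<\<nu>*r. M0 r z i a * complex_of_real (C a b)) + of_real y * (\<Sum>a<\<nu>*r. M0 r z i a * complex_of_real (C' a b))"
    proof -
      have "M0 r z i a * complex_of_real (x * C a b + y * C' a b) = of_real x * (M0 r z i a * complex_of_real (C a b)) + of_real y * (M0 r z i a * complex_of_real (C' a b))" for a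
        by (simp add: algebra_simps)
      then show ?thesis by (simp only: sum.distrib sum_distrib_left)
    qed
    also have "\<dots> = (if i = b then complex_of_real (x*e1 + y*e2) else 0)"
    proof -
      have q1: "(\<Sum>a<\<nu>*r. M0 r z i a * complex_of_real (C a b)) = (if i = b then complex_of_real e1 else 0)"
        using h1 i unfolding QCc_def by blast
      have q2: "(\<Sum>a<\<nu>*r. M0 r z i a * complex_of_real (C' a b)) = (if i = b then complex_of_real e2 else 0)"
        using h2 i unfolding QCc_def by blast
      show ?thesis unfolding q1 q2 by simp
    qed
    finally show "(\<Sum>a<\<nu>*r. M0 r z i a * complex_of_real (x * C a b + y * C' a b)) = (if i = b then complex_of_real (x*e1 + y*e2) else 0)" .
  qed
qed

lemma sum_app2: "(\<Sum>x\<in>A. f x) a b = (\<Sum>x\<in>A. f x a (b::'c) :: real)"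
  by (induction A rule: infinite_finite_induct) auto

lemma vs_mscale: "vector_space mscale"
  by unfold_locales (simp_all add: mscale_def fun_eq_iff algebra_simps)


theorem proposition7p5:
  fixes q r \<nu> :: nat
  assumes "0 < q" and "q < \<nu>" and "\<nu> \<le> r"
  defines "S \<equiv> {C :: nat \<Rightarrow> nat \<Rightarrow> real.
             (\<forall>a b. (\<nu> * r \<le> a \<or> q \<le> b) \<longrightarrow> C a b = 0) \<and>
             (\<forall>z :: complex. \<forall>i<q. \<forall>b<q.
                (\<Sum>a<\<nu> * r. M0 r z i a * complex_of_real (C a b)) = (if i = b then 1 else 0))}"
  shows "S \<noteq> {} \<and>
         (\<exists>C0 V. module.subspace mscale V \<and> vector_space.dim mscale V = (\<nu> - q) * r * q \<and>
                 S = (\<lambda>v. C0 + v) ` V)"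
proof -
  interpret VS: vector_space mscale by (rule vs_mscale)
  have SS: "S = Sol q \<nu> r 1"
    unfolding S_def Sol_def QCc_def by auto
  obtain C0 where C0: "C0 \<in> Sol q \<nu> r 1"
    using glob_exists[OF assms(2,3), of 1 "\<lambda>a b. 0"] by blast
  define I where "I = {q*r..<\<nu>*r} \<times> {..<q}"
  have finI: "finite I" by (simp add: I_def)
  have cardI: "card I = (\<nu> - q) * r * q"
    by (simp add: I_def card_cartesian_product diff_mult_distrib)
  define e where "e x = (SOME C. C \<in> Sol q \<nu> r 0 \<and>
      (\<forall>a b. q*r \<le> a \<longrightarrow> a < \<nu>*r \<longrightarrow> b < q \<longrightarrow> C a b = (if (a, b) = x then 1 else 0)))" for x
  have e0: "e x \<in> Sol q \<nu> r 0 \<and>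
      (\<forall>a b. q*r \<le> a \<longrightarrow> a < \<nu>*r \<longrightarrow> b < q \<longrightarrow> e x a b = (if (a, b) = x then 1 else 0))" for x
    unfolding e_def
    by (rule someI_ex[OF glob_exists[OF assms(2,3), of 0 "\<lambda>a b. if (a, b) = x then 1 else 0"]])
  have eSol: "e x \<in> Sol q \<nu> r 0" for x using e0[of x] by (rule conjunct1)
  have eval: "e x a b = (if (a, b) = x then 1 else 0)" if "(a, b) \<in> I" for x a b
    using conjunct2[OF e0[of x]] that by (auto simp: I_def)
  have inj: "inj_on e I"
  proof (rule inj_onI)
    fix x y assume xy: "x \<in> I" "y \<in> I" "e x = e y"
    obtain a b where x: "x = (a, b)" by (cases x)
    have "e x a b = e y a b" using xy by simp
    then show "x = y" using eval[of a b x] eval[of a b y] xy x by (auto split: if_splits)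
  qed
  define B where "B = e ` I"
  have finB: "finite B" using finI by (simp add: B_def)
  have H: "VS.subspace (Sol q \<nu> r 0)"
  proof (rule VS.subspaceI)
    have "(\<lambda>a b. 0 * C0 a b + 0 * C0 a b) \<in> Sol q \<nu> r (0*1 + 0*1)" by (rule glob_lin[OF C0 C0])
    then show "0 \<in> Sol q \<nu> r 0" by (simp add: zero_fun_def)
  next
    fix x y assume "x \<in> Sol q \<nu> r 0" "y \<in> Sol q \<nu> r 0"
    from glob_lin[OF this, of 1 1] show "x + y \<in> Sol q \<nu> r 0" by (simp add: plus_fun_def)
  next
    fix c x assume "x \<in> Sol q \<nu> r 0"
    from glob_lin[OF this this, of c 0] show "mscale c x \<in> Sol q \<nu> r 0" by (simp add: mscale_def)
  qed
  have spanH: "VS.span B \<subseteq> Sol q \<nu> r 0"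
    by (rule VS.span_minimal) (use eSol H in \<open>auto simp: B_def\<close>)
  have indep: "VS.independent B"
  proof
    assume "VS.dependent B"
    then obtain u v where uv: "v \<in> B" "u v \<noteq> 0" "(\<Sum>v\<in>B. mscale (u v) v) = 0"
      unfolding VS.dependent_finite[OF finB] by blast
    obtain x where x: "x \<in> I" "v = e x" using uv(1) by (auto simp: B_def)
    obtain a b where ab: "x = (a, b)" by (cases x)
    have "0 = (\<Sum>v\<in>B. mscale (u v) v) a b" using uv(3) by simp
    also have "\<dots> = (\<Sum>v\<in>B. u v * v a b)" by (simp add: sum_app2 mscale_def)
    also have "\<dots> = (\<Sum>y\<in>I. u (e y) * e y a b)"
      unfolding B_def by (simp add: sum.reindex[OF inj])
    also have "\<dots> = (\<Sum>y\<in>I. if y = x then u (e x) else 0)"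
      by (intro sum.cong refl) (use x ab eval in auto)
    also have "\<dots> = u (e x)" using x finI by simp
    finally show False using uv(2) x by simp
  qed
  have dimV: "VS.dim (VS.span B) = (\<nu> - q) * r * q"
    using VS.dim_span_eq_card_independent[OF indep] card_image[OF inj] cardI by (simp add: B_def)
  have eqS: "S = (\<lambda>v. C0 + v) ` VS.span B"
  proof
    show "S \<subseteq> (\<lambda>v. C0 + v) ` VS.span B"
    proof
      fix C assume "C \<in> S"
      then have C: "C \<in> Sol q \<nu> r 1" by (simp add: SS)
      define w where "w = (\<lambda>a b. 1 * C a b + (-1) * C0 a b)"
      have wS: "w \<in> Sol q \<nu> r 0" using glob_lin[OF C C0, of 1 "-1"] by (simp add: w_def)
      define u where "u = (\<Sum>x\<in>I. mscale (w (fst x) (snd x)) (e x))"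
      have uspan: "u \<in> VS.span B" unfolding u_def
        by (intro VS.span_sum VS.span_scale VS.span_base) (auto simp: B_def)
      have uS: "u \<in> Sol q \<nu> r 0" using uspan spanH by blast
      have "u = w"
      proof (rule glob_unique[OF assms(2,3) uS wS], intro allI impI)
        fix a b assume ab: "q*r \<le> a" "a < \<nu>*r" "b < q"
        then have abI: "(a, b) \<in> I" by (simp add: I_def)
        have "u a b = (\<Sum>x\<in>I. w (fst x) (snd x) * e x a b)" by (simp add: u_def sum_app2 mscale_def)
        also have "\<dots> = (\<Sum>x\<in>I. if x = (a, b) then w a b else 0)"
          by (intro sum.cong refl) (auto simp: eval[OF abI])
        also have "\<dots> = w a b" using abI finI by simp
        finally show "u a b = w a b" .
      qed
      then have "C = C0 + u" by (simp add: w_def fun_eq_iff)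
      then show "C \<in> (\<lambda>v. C0 + v) ` VS.span B" using uspan by blast
    qed
  next
    show "(\<lambda>v. C0 + v) ` VS.span B \<subseteq> S"
    proof
      fix C assume "C \<in> (\<lambda>v. C0 + v) ` VS.span B"
      then obtain v where v: "v \<in> VS.span B" "C = C0 + v" by blast
      have "v \<in> Sol q \<nu> r 0" using v spanH by blast
      from glob_lin[OF C0 this, of 1 1] have "C \<in> Sol q \<nu> r 1" by (simp add: v plus_fun_def)
      then show "C \<in> S" by (simp add: SS)
    qed
  qed
  show ?thesis
  proof (intro conjI exI[of _ C0] exI[of _ "VS.span B"])
    show "S \<noteq> {}" using C0 SS by blast
    show "VS.subspace (VS.span B)" by (rule VS.subspace_span)
    show "VS.dim (VS.span B) = (\<nu> - q) * r * q" by (rule dimV)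
    show "S = (\<lambda>v. C0 + v) ` VS.span B" by (rule eqS)
  qed
qed

end
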